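(* Let $E$ be an order continuous Banach lattice with a weak unit, represented over a probability space $(\Omega,\Sigma,\mu)$ as in the context, and let $j:E\to L_1(\mu)$ be the inclusion. Then $j$ is disjointly strictly singular if and only if for every disjoint sequence $(x_n)$ in $S_E$ one has $\|j x_n\|_1\to 0$ as $n\to\infty$.
   Context: A Banach lattice $E$ is order continuous if every net decreasing in order to $0$ converges in norm to $0$; $e\in E_+$ is a weak unit if $|x|\wedge e=0$ implies $x=0$. Representation: every order continuous Banach lattice $E$ with a weak unit can be represented over a probability space $(\Omega,\Sigma,\mu)$ so that $L_\infty(\mu)\subset E\subset L_1(\mu)$, $E$ dense in $L_1(\mu)$, $L_\infty(\mu)$ dense in $E$, $\|f\|_1\le\|f\|_E\le 2\|f\|_\infty$ for $f\in L_\infty(\mu)$, and the order of $E$ induced by $L_1(\mu)$; the inclusion $j$ is then bounded. An operator $T\in\mathrm{L}(E,Y)$ is disjointly strictly singular ($\mathrm{DSS}$) if there is no disjoint sequence $(x_n)$ of non-zero vectors in $E$ such that the restriction of $T$ to the closed span $[x_n]$ is an isomorphism. *)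

theory Defs
  imports "HOL-Probability.Probability"
begin

text \<open>An order continuous Banach lattice E with a weak unit, represented over a
probability space M as in the paper: E is a set of (representatives of) integrable
real functions on the space of M, N is its lattice norm, the order is the a.e. order
induced by L1(M).\<close>

definition bounded_ae :: "'a measure \<Rightarrow> ('a \<Rightarrow> real) \<Rightarrow> real \<Rightarrow> bool" where
  "bounded_ae M g c \<longleftrightarrow> g \<in> borel_measurable M \<and> (AE t in M. \<bar>g t\<bar> \<le> c)"

definition repr_ocbl :: "'a measure \<Rightarrow> ('a \<Rightarrow> real) set \<Rightarrow> (('a \<Rightarrow> real) \<Rightarrow> real) \<Rightarrow> bool" where
  "repr_ocbl M E N \<longleftrightarrow>
     prob_space M \<and>
     (\<forall>f\<in>E. integrable M f) \<and>
     (\<forall>f\<in>E. \<forall>g\<in>E. (\<lambda>t. f t + g t) \<in> E) \<and>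
     (\<forall>f\<in>E. \<forall>c::real. (\<lambda>t. c * f t) \<in> E) \<and>
     (\<forall>f\<in>E. (\<lambda>t. \<bar>f t\<bar>) \<in> E) \<and>
     (\<forall>f\<in>E. \<forall>g. g \<in> borel_measurable M \<and> (AE t in M. f t = g t) \<longrightarrow> g \<in> E) \<and>
     (\<forall>f\<in>E. \<forall>g\<in>E. (AE t in M. f t = g t) \<longrightarrow> N f = N g) \<and>
     (\<forall>f\<in>E. N f = 0 \<longleftrightarrow> (AE t in M. f t = 0)) \<and>
     (\<forall>f\<in>E. \<forall>g\<in>E. N (\<lambda>t. f t + g t) \<le> N f + N g) \<and>
     (\<forall>f\<in>E. \<forall>c. N (\<lambda>t. c * f t) = \<bar>c\<bar> * N f) \<and>
     (\<forall>f\<in>E. \<forall>g\<in>E. (AE t in M. \<bar>f t\<bar> \<le> \<bar>g t\<bar>) \<longrightarrow> N f \<le> N g) \<and>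
     \<comment> \<open>completeness (Banach)\<close>
     (\<forall>X. (\<forall>n. X n \<in> E) \<and>
          (\<forall>\<epsilon>>0. \<exists>K. \<forall>m\<ge>K. \<forall>n\<ge>K. N (\<lambda>t. X m t - X n t) < \<epsilon>) \<longrightarrow>
          (\<exists>f\<in>E. (\<lambda>n. N (\<lambda>t. X n t - f t)) \<longlonglongrightarrow> 0)) \<and>
     \<comment> \<open>order continuity: every downward directed family of positive elements with
         infimum 0 in E (i.e. a net decreasing to 0) converges to 0 in norm\<close>
     (\<forall>D. D \<subseteq> E \<and> D \<noteq> {} \<and> (\<forall>x\<in>D. AE t in M. 0 \<le> x t) \<and>
          (\<forall>x\<in>D. \<forall>y\<in>D. \<exists>z\<in>D. (AE t in M. z t \<le> x t) \<and> (AE t in M. z t \<le> y t)) \<and>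
          (\<forall>g\<in>E. (\<forall>x\<in>D. AE t in M. g t \<le> x t) \<longrightarrow> (AE t in M. g t \<le> 0))
          \<longrightarrow> (\<forall>\<epsilon>>0. \<exists>x\<in>D. N x < \<epsilon>)) \<and>
     \<comment> \<open>weak unit\<close>
     (\<exists>e\<in>E. (AE t in M. 0 \<le> e t) \<and>
          (\<forall>f\<in>E. (AE t in M. min \<bar>f t\<bar> (e t) = 0) \<longrightarrow> (AE t in M. f t = 0))) \<and>
     \<comment> \<open>L_infinity \<subseteq> E \<subseteq> L_1 with the norm estimates\<close>
     (\<forall>g c. bounded_ae M g c \<longrightarrow> g \<in> E \<and>
          (\<integral>t. \<bar>g t\<bar> \<partial>M) \<le> N g \<and> N g \<le> 2 * c) \<and>
     \<comment> \<open>L_infinity dense in E\<close>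
     (\<forall>f\<in>E. \<forall>\<epsilon>>0. \<exists>g c. bounded_ae M g c \<and> N (\<lambda>t. f t - g t) < \<epsilon>)"

definition disjoint_seq :: "'a measure \<Rightarrow> (nat \<Rightarrow> 'a \<Rightarrow> real) \<Rightarrow> bool" where
  "disjoint_seq M x \<longleftrightarrow> (\<forall>m n. m \<noteq> n \<longrightarrow> (AE t in M. min \<bar>x m t\<bar> \<bar>x n t\<bar> = 0))"

definition closed_span :: "('a \<Rightarrow> real) set \<Rightarrow> (('a \<Rightarrow> real) \<Rightarrow> real) \<Rightarrow> (nat \<Rightarrow> 'a \<Rightarrow> real) \<Rightarrow> ('a \<Rightarrow> real) set" where
  "closed_span E N x = {y \<in> E. \<forall>\<epsilon>>0. \<exists>k a. N (\<lambda>t. y t - (\<Sum>i<k. a i * x i t)) < \<epsilon>}"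

definition incl_DSS :: "'a measure \<Rightarrow> ('a \<Rightarrow> real) set \<Rightarrow> (('a \<Rightarrow> real) \<Rightarrow> real) \<Rightarrow> bool" where
  "incl_DSS M E N \<longleftrightarrow>
     \<not> (\<exists>x. (\<forall>n. x n \<in> E \<and> \<not> (AE t in M. x n t = 0)) \<and> disjoint_seq M x \<and>
           (\<exists>c>0. \<forall>y\<in>closed_span E N x. c * N y \<le> (\<integral>t. \<bar>y t\<bar> \<partial>M)))"

end

theory Submission
  imports Defs
begin

context
  fixes M :: "'a measure" and E N
  assumes R: "repr_ocbl M E N"
begin

lemmas C = R[unfolded repr_ocbl_def]

lemma E_int: "f \<in> E \<Longrightarrow> integrable M f"
  using C[THEN conjunct2, THEN conjunct1] by blast
lemma E_add: "f \<in> E \<Longrightarrow> g \<in> E \<Longrightarrow> (\<lambda>t. f t + g t) \<in> E"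
  using C[THEN conjunct2, THEN conjunct2, THEN conjunct1] by blast
lemma E_scale: "f \<in> E \<Longrightarrow> (\<lambda>t. c * f t) \<in> E"
  using C[THEN conjunct2, THEN conjunct2, THEN conjunct2, THEN conjunct1] by blast
lemma N_zero_iff: "f \<in> E \<Longrightarrow> N f = 0 \<longleftrightarrow> (AE t in M. f t = 0)"
  using C[THEN conjunct2, THEN conjunct2, THEN conjunct2, THEN conjunct2, THEN conjunct2, THEN conjunct2, THEN conjunct2, THEN conjunct1] by blast
lemma N_tri: "f \<in> E \<Longrightarrow> g \<in> E \<Longrightarrow> N (\<lambda>t. f t + g t) \<le> N f + N g"
  using C[THEN conjunct2, THEN conjunct2, THEN conjunct2, THEN conjunct2, THEN conjunct2, THEN conjunct2, THEN conjunct2, THEN conjunct2, THEN conjunct1] by blast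
lemma N_scale: "f \<in> E \<Longrightarrow> N (\<lambda>t. c * f t) = \<bar>c\<bar> * N f"
  using C[THEN conjunct2, THEN conjunct2, THEN conjunct2, THEN conjunct2, THEN conjunct2, THEN conjunct2, THEN conjunct2, THEN conjunct2, THEN conjunct2, THEN conjunct1] by blast
lemma N_mono: "f \<in> E \<Longrightarrow> g \<in> E \<Longrightarrow> (AE t in M. \<bar>f t\<bar> \<le> \<bar>g t\<bar>) \<Longrightarrow> N f \<le> N g"
  using C[THEN conjunct2, THEN conjunct2, THEN conjunct2, THEN conjunct2, THEN conjunct2, THEN conjunct2, THEN conjunct2, THEN conjunct2, THEN conjunct2, THEN conjunct2, THEN conjunct1] by blast
lemma bnd: "bounded_ae M g c \<Longrightarrow> g \<in> E \<and> (\<integral>t. \<bar>g t\<bar> \<partial>M) \<le> N g"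
  using C[THEN conjunct2, THEN conjunct2, THEN conjunct2, THEN conjunct2, THEN conjunct2, THEN conjunct2, THEN conjunct2, THEN conjunct2, THEN conjunct2, THEN conjunct2, THEN conjunct2, THEN conjunct2, THEN conjunct2, THEN conjunct2, THEN conjunct1] by blast

lemma E_diff: "f \<in> E \<Longrightarrow> g \<in> E \<Longrightarrow> (\<lambda>t. f t - g t) \<in> E"
proof -
  assume "f \<in> E" "g \<in> E"
  then have "(\<lambda>t. f t + (-1) * g t) \<in> E" by (intro E_add E_scale)
  moreover have "(\<lambda>t. f t + (-1) * g t) = (\<lambda>t. f t - g t)" by auto
  ultimately show ?thesis by simp
qed

lemma zero_E: "(\<lambda>t. 0) \<in> E"
  using bnd[of "\<lambda>t. 0" 0] by (simp add: bounded_ae_def)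

lemma N_nonneg: "f \<in> E \<Longrightarrow> 0 \<le> N f"
proof -
  assume f: "f \<in> E"
  have "N (\<lambda>t. f t + (-1) * f t) \<le> N f + N (\<lambda>t. (-1) * f t)"
    using f by (intro N_tri E_scale)
  moreover have "(\<lambda>t. f t + (-1) * f t) = (\<lambda>t. 0)" by auto
  moreover have "N (\<lambda>t. 0) = 0" using N_zero_iff[OF zero_E] by simp
  ultimately show ?thesis using N_scale[OF f, of "-1"] by simp
qed

lemma L1_le_N: assumes f: "f \<in> E" shows "(\<integral>t. \<bar>f t\<bar> \<partial>M) \<le> N f"
proof -
  have fm[measurable]: "f \<in> borel_measurable M" using E_int[OF f] by auto
  define h where "h n = (\<lambda>t. min \<bar>f t\<bar> (real n))" for n
  have hb: "bounded_ae M (h n) (real n)" for n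
    unfolding bounded_ae_def h_def by auto
  have le: "(\<integral>t. \<bar>h n t\<bar> \<partial>M) \<le> N f" for n
  proof -
    have "(\<integral>t. \<bar>h n t\<bar> \<partial>M) \<le> N (h n)" using bnd[OF hb] by blast
    also have "\<dots> \<le> N f" using bnd[OF hb] f by (intro N_mono) (auto simp: h_def)
    finally show ?thesis .
  qed
  have "(\<lambda>n. \<integral>t. \<bar>h n t\<bar> \<partial>M) \<longlonglongrightarrow> (\<integral>t. \<bar>f t\<bar> \<partial>M)"
  proof (rule integral_dominated_convergence[where w="\<lambda>t. \<bar>f t\<bar>"])
    show "integrable M (\<lambda>t. \<bar>f t\<bar>)" using E_int[OF f] by auto
    show "(\<lambda>t. \<bar>h i t\<bar>) \<in> borel_measurable M" for i unfolding h_def by measurable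
    show "AE t in M. norm \<bar>h i t\<bar> \<le> \<bar>f t\<bar>" for i unfolding h_def by auto
    show "AE t in M. (\<lambda>i. \<bar>h i t\<bar>) \<longlonglongrightarrow> \<bar>f t\<bar>"
    proof (rule AE_I2)
      fix t
      obtain n0 where "\<bar>f t\<bar> \<le> real n0" using real_arch_simple by blast
      then have "\<forall>n\<ge>n0. \<bar>h n t\<bar> = \<bar>f t\<bar>" unfolding h_def by auto
      then show "(\<lambda>i. \<bar>h i t\<bar>) \<longlonglongrightarrow> \<bar>f t\<bar>"
        by (intro tendsto_eventually) (auto simp: eventually_sequentially)
    qed
  qed simp
  then show ?thesis using le by (intro LIMSEQ_le_const2) auto
qed

lemma sum_E: "(\<And>i. x i \<in> E) \<Longrightarrow> (\<lambda>t. \<Sum>i<(k::nat). a i * x i t) \<in> E"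
proof (induction k)
  case 0 then show ?case using zero_E by simp
next
  case (Suc k)
  then have "(\<lambda>t. (\<Sum>i<k. a i * x i t) + a k * x k t) \<in> E" by (intro E_add E_scale) auto
  then show ?case by simp
qed

lemma N_sum_le: "(\<And>i. x i \<in> E) \<Longrightarrow> N (\<lambda>t. \<Sum>i<(k::nat). a i * x i t) \<le> (\<Sum>i<k. \<bar>a i\<bar> * N (x i))"
proof (induction k)
  case 0 then show ?case using N_zero_iff[OF zero_E] by simp
next
  case (Suc k)
  have "N (\<lambda>t. (\<Sum>i<k. a i * x i t) + a k * x k t) \<le> N (\<lambda>t. \<Sum>i<k. a i * x i t) + N (\<lambda>t. a k * x k t)"
    using Suc.prems by (intro N_tri sum_E E_scale) auto
  also have "\<dots> \<le> (\<Sum>i<k. \<bar>a i\<bar> * N (x i)) + \<bar>a k\<bar> * N (x k)"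
    using Suc N_scale by auto
  finally show ?case by simp
qed

end

lemma abs_sum_disj:
  fixes x :: "nat \<Rightarrow> 'a \<Rightarrow> real"
  assumes "\<forall>i j. i \<noteq> j \<longrightarrow> min \<bar>x i t\<bar> \<bar>x j t\<bar> = 0"
  shows "\<bar>\<Sum>i<k. a i * x i t\<bar> = (\<Sum>i<k. \<bar>a i\<bar> * \<bar>x i t\<bar>)"
proof (induction k)
  case 0 then show ?case by simp
next
  case (Suc k)
  show ?case
  proof (cases "x k t = 0")
    case True then show ?thesis using Suc by simp
  next
    case False
    then have z: "\<forall>i<k. x i t = 0" using assms
      by (metis abs_eq_0 abs_ge_zero le_less min_def nat_neq_iff)
    then have "(\<Sum>i<k. a i * x i t) = 0" "(\<Sum>i<k. \<bar>a i\<bar> * \<bar>x i t\<bar>) = 0" by simp_all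
    then show ?thesis by (simp add: abs_mult)
  qed
qed

context
  fixes M :: "'a measure" and E N
  assumes R: "repr_ocbl M E N"
begin

lemma L1_sum:
  assumes xE: "\<And>i. x i \<in> E" and d: "disjoint_seq M x"
  shows "(\<integral>t. \<bar>\<Sum>i<k. a i * x i t\<bar> \<partial>M) = (\<Sum>i<k. \<bar>a i\<bar> * (\<integral>t. \<bar>x i t\<bar> \<partial>M))"
proof -
  have ae: "AE t in M. \<forall>i j. i \<noteq> j \<longrightarrow> min \<bar>x i t\<bar> \<bar>x j t\<bar> = 0"
    unfolding AE_all_countable
  proof (intro allI)
    fix i j show "AE t in M. i \<noteq> j \<longrightarrow> min \<bar>x i t\<bar> \<bar>x j t\<bar> = 0"
      using d unfolding disjoint_seq_def by (cases "i = j") auto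
  qed
  have int: "integrable M (x i)" for i using E_int[OF R xE] .
  have [measurable]: "x i \<in> borel_measurable M" for i using int by auto
  have "(\<integral>t. \<bar>\<Sum>i<k. a i * x i t\<bar> \<partial>M) = (\<integral>t. (\<Sum>i<k. \<bar>a i\<bar> * \<bar>x i t\<bar>) \<partial>M)"
    using ae by (intro integral_cong_AE) (auto intro!: abs_sum_disj)
  also have "\<dots> = (\<Sum>i<k. \<bar>a i\<bar> * (\<integral>t. \<bar>x i t\<bar> \<partial>M))"
    using int by (subst Bochner_Integration.integral_sum) (auto simp: integral_mult_right_zero)
  finally show ?thesis .
qed

lemma span_bound:
  assumes xE: "\<And>i. x i \<in> E" and d: "disjoint_seq M x" and N1: "\<And>i. N (x i) \<le> 1"
    and L: "\<And>i. \<delta> \<le> (\<integral>t. \<bar>x i t\<bar> \<partial>M)" and dp: "\<delta> > 0"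
    and y: "y \<in> closed_span E N x"
  shows "\<delta> * N y \<le> (\<integral>t. \<bar>y t\<bar> \<partial>M)"
proof -
  have fin: "\<delta> * N (\<lambda>t. \<Sum>i<k. a i * x i t) \<le> (\<integral>t. \<bar>\<Sum>i<k. a i * x i t\<bar> \<partial>M)" for k a
  proof -
    have "N (\<lambda>t. \<Sum>i<k. a i * x i t) \<le> (\<Sum>i<k. \<bar>a i\<bar> * N (x i))" using N_sum_le[OF R xE] .
    also have "\<dots> \<le> (\<Sum>i<k. \<bar>a i\<bar>)"
      by (intro sum_mono) (use N1 in \<open>simp add: mult_left_le\<close>)
    finally have "\<delta> * N (\<lambda>t. \<Sum>i<k. a i * x i t) \<le> \<delta> * (\<Sum>i<k. \<bar>a i\<bar>)"
      using dp by (intro mult_left_mono) auto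
    also have "\<dots> = (\<Sum>i<k. \<bar>a i\<bar> * \<delta>)" by (simp add: sum_distrib_left mult.commute)
    also have "\<dots> \<le> (\<Sum>i<k. \<bar>a i\<bar> * (\<integral>t. \<bar>x i t\<bar> \<partial>M))"
      by (intro sum_mono mult_left_mono L) auto
    also have "\<dots> = (\<integral>t. \<bar>\<Sum>i<k. a i * x i t\<bar> \<partial>M)" using L1_sum[OF xE d] by simp
    finally show ?thesis .
  qed
  have yE: "y \<in> E" and ap: "\<And>\<epsilon>. \<epsilon> > 0 \<Longrightarrow> \<exists>k a. N (\<lambda>t. y t - (\<Sum>i<k. a i * x i t)) < \<epsilon>"
    using y unfolding closed_span_def by auto
  show ?thesis
  proof (rule field_le_epsilon)
    fix e :: real assume e: "0 < e"
    define \<epsilon> where "\<epsilon> = e / (1 + \<delta>)"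
    have \<epsilon>: "\<epsilon> > 0" using e dp by (simp add: \<epsilon>_def)
    obtain k a where ka: "N (\<lambda>t. y t - (\<Sum>i<k. a i * x i t)) < \<epsilon>" using ap[OF \<epsilon>] by blast
    define s where "s = (\<lambda>t. \<Sum>i<k. a i * x i t)"
    have sE: "s \<in> E" unfolding s_def by (rule sum_E[OF R xE])
    have dE: "(\<lambda>t. y t - s t) \<in> E" using E_diff[OF R yE sE] .
    have nd: "N (\<lambda>t. y t - s t) < \<epsilon>" using ka by (simp add: s_def)
    have "N (\<lambda>t. s t + (y t - s t)) \<le> N s + N (\<lambda>t. y t - s t)" using N_tri[OF R sE dE] .
    then have Ny: "N y \<le> N s + N (\<lambda>t. y t - s t)" by simp
    have "(\<integral>t. \<bar>s t\<bar> \<partial>M) \<le> (\<integral>t. \<bar>y t\<bar> + \<bar>y t - s t\<bar> \<partial>M)"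
      using E_int[OF R sE] E_int[OF R yE] by (intro integral_mono) auto
    also have "\<dots> = (\<integral>t. \<bar>y t\<bar> \<partial>M) + (\<integral>t. \<bar>y t - s t\<bar> \<partial>M)"
      using E_int[OF R sE] E_int[OF R yE] by (intro Bochner_Integration.integral_add integrable_abs Bochner_Integration.integrable_diff)
    also have "\<dots> \<le> (\<integral>t. \<bar>y t\<bar> \<partial>M) + \<epsilon>" using L1_le_N[OF R dE] nd by simp
    finally have Is: "(\<integral>t. \<bar>s t\<bar> \<partial>M) \<le> (\<integral>t. \<bar>y t\<bar> \<partial>M) + \<epsilon>" .
    have fs: "\<delta> * N s \<le> (\<integral>t. \<bar>s t\<bar> \<partial>M)" using fin unfolding s_def .
    have "\<delta> * N y \<le> \<delta> * N s + \<delta> * \<epsilon>"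
      using Ny nd dp by (smt (verit) mult_left_mono distrib_left)
    also have "\<dots> \<le> (\<integral>t. \<bar>y t\<bar> \<partial>M) + \<epsilon> + \<delta> * \<epsilon>" using fs Is by simp
    also have "\<dots> = (\<integral>t. \<bar>y t\<bar> \<partial>M) + e"
    proof -
      have "\<epsilon> * (1 + \<delta>) = e" unfolding \<epsilon>_def using dp by simp
      then show ?thesis by (simp add: algebra_simps)
    qed
    finally show "\<delta> * N y \<le> (\<integral>t. \<bar>y t\<bar> \<partial>M) + e" .
  qed
qed

end

theorem proposition4p1:
  assumes "repr_ocbl M E N"
  shows "incl_DSS M E N \<longleftrightarrow>
    (\<forall>x. (\<forall>n. x n \<in> E \<and> N (x n) = 1) \<and> disjoint_seq M x \<longrightarrow>
         (\<lambda>n. \<integral>t. \<bar>x n t\<bar> \<partial>M) \<longlonglongrightarrow> 0)"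
proof -
  note R = assms
  show ?thesis
  proof
    assume dss: "incl_DSS M E N"
    show "\<forall>x. (\<forall>n. x n \<in> E \<and> N (x n) = 1) \<and> disjoint_seq M x \<longrightarrow>
         (\<lambda>n. \<integral>t. \<bar>x n t\<bar> \<partial>M) \<longlonglongrightarrow> 0"
    proof (intro allI impI)
      fix x assume h: "(\<forall>n. x n \<in> E \<and> N (x n) = 1) \<and> disjoint_seq M x"
      define X where "X n = (\<integral>t. \<bar>x n t\<bar> \<partial>M)" for n
      have X0: "X n \<ge> 0" for n unfolding X_def by simp
      show "(\<lambda>n. \<integral>t. \<bar>x n t\<bar> \<partial>M) \<longlonglongrightarrow> 0"
      proof (rule ccontr)
        assume nt: "\<not> (\<lambda>n. \<integral>t. \<bar>x n t\<bar> \<partial>M) \<longlonglongrightarrow> 0"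
        have "\<exists>\<delta>>0. \<forall>m. \<exists>n\<ge>m. \<delta> \<le> X n"
        proof (rule ccontr)
          assume "\<not> (\<exists>\<delta>>0. \<forall>m. \<exists>n\<ge>m. \<delta> \<le> X n)"
          then have a: "\<forall>\<delta>>0. \<exists>m. \<forall>n\<ge>m. X n < \<delta>" by (meson not_le)
          have "X \<longlonglongrightarrow> 0" unfolding LIMSEQ_def dist_real_def using a X0 by simp
          then show False using nt unfolding X_def by simp
        qed
        then obtain \<delta> where dp: "\<delta> > 0" and fr: "\<forall>m. \<exists>n\<ge>m. \<delta> \<le> X n" by blast
        have "infinite {n. \<delta> \<le> X n}" unfolding infinite_nat_iff_unbounded_le using fr by auto
        from infinite_enumerate[OF this] obtain r :: "nat \<Rightarrow> nat" where r: "strict_mono r" "\<forall>n. r n \<in> {n. \<delta> \<le> X n}"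
          by blast
        define z where "z n = x (r n)" for n
        have zE: "\<And>n. z n \<in> E" and zN: "\<And>n. N (z n) = 1" using h unfolding z_def by auto
        have zd: "disjoint_seq M z"
          using h strict_mono_eq[OF r(1)] unfolding disjoint_seq_def z_def by metis
        have zL: "\<And>n. \<delta> \<le> (\<integral>t. \<bar>z n t\<bar> \<partial>M)" using r(2) unfolding z_def X_def by auto
        have bd: "\<forall>y\<in>closed_span E N z. \<delta> * N y \<le> (\<integral>t. \<bar>y t\<bar> \<partial>M)"
          using span_bound[OF R zE zd _ zL dp] zN by simp
        have nz: "\<not> (AE t in M. z n t = 0)" for n using N_zero_iff[OF R zE[of n]] zN[of n] by simp
        show False using dss bd zE nz zd dp unfolding incl_DSS_def by blast
      qed
    qed
  next
    assume H: "\<forall>x. (\<forall>n. x n \<in> E \<and> N (x n) = 1) \<and> disjoint_seq M x \<longrightarrow>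
         (\<lambda>n. \<integral>t. \<bar>x n t\<bar> \<partial>M) \<longlonglongrightarrow> 0"
    show "incl_DSS M E N" unfolding incl_DSS_def
    proof
      assume "\<exists>x. (\<forall>n. x n \<in> E \<and> \<not> (AE t in M. x n t = 0)) \<and> disjoint_seq M x \<and>
           (\<exists>c>0. \<forall>y\<in>closed_span E N x. c * N y \<le> (\<integral>t. \<bar>y t\<bar> \<partial>M))"
      then obtain x c where xE: "\<And>n. x n \<in> E" and nz: "\<And>n. \<not> (AE t in M. x n t = 0)"
        and d: "disjoint_seq M x" and cp: "c > 0"
        and cb: "\<forall>y\<in>closed_span E N x. c * N y \<le> (\<integral>t. \<bar>y t\<bar> \<partial>M)" by blast
      have Np: "N (x n) > 0" for n
        using N_nonneg[OF R xE[of n]] N_zero_iff[OF R xE[of n]] nz[of n] by linarith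
      define y where "y n = (\<lambda>t. (1 / N (x n)) * x n t)" for n
      have yE: "y n \<in> E" for n unfolding y_def by (rule E_scale[OF R xE])
      have yN: "N (y n) = 1" for n unfolding y_def using N_scale[OF R xE[of n], of "1 / N (x n)"] Np[of n] by (simp del: divide_const_simps)
      have yd: "disjoint_seq M y" unfolding disjoint_seq_def
      proof (intro allI impI)
        fix m n :: nat assume "m \<noteq> n"
        then have "AE t in M. min \<bar>x m t\<bar> \<bar>x n t\<bar> = 0" using d unfolding disjoint_seq_def by blast
        then show "AE t in M. min \<bar>y m t\<bar> \<bar>y n t\<bar> = 0"
        proof (rule eventually_mono)
          fix t assume a: "min \<bar>x m t\<bar> \<bar>x n t\<bar> = 0"
          then have "x m t = 0 \<or> x n t = 0" by (auto simp: min_def split: if_splits)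
          then show "min \<bar>y m t\<bar> \<bar>y n t\<bar> = 0" unfolding y_def by auto
        qed
      qed
      have ys: "y n \<in> closed_span E N x" for n
        unfolding closed_span_def
      proof (intro CollectI conjI allI impI yE)
        fix \<epsilon> :: real assume e: "\<epsilon> > 0"
        define a where "a i = (if i = n then 1 / N (x n) else 0)" for i
        have "(\<Sum>i<Suc n. a i * x i t) = y n t" for t
        proof -
          have "(\<Sum>i<Suc n. a i * x i t) = (\<Sum>i<Suc n. if i = n then 1 / N (x n) * x n t else 0)"
            unfolding a_def by (intro sum.cong) auto
          also have "\<dots> = y n t" unfolding y_def by (simp add: sum.delta)
          finally show ?thesis .
        qed
        then have "N (\<lambda>t. y n t - (\<Sum>i<Suc n. a i * x i t)) = N (\<lambda>t. 0)" by simp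
        also have "\<dots> = 0" using N_zero_iff[OF R zero_E[OF R]] by simp
        finally show "\<exists>k a. N (\<lambda>t. y n t - (\<Sum>i<k. a i * x i t)) < \<epsilon>" using e by (intro exI[of _ "Suc n"] exI[of _ a]) simp
      qed
      have cl: "c \<le> (\<integral>t. \<bar>y n t\<bar> \<partial>M)" for n using cb ys[of n] yN[of n] by auto
      have "(\<lambda>n. \<integral>t. \<bar>y n t\<bar> \<partial>M) \<longlonglongrightarrow> 0" using H yE yN yd by blast
      from order_tendstoD(2)[OF this cp] obtain n where "(\<integral>t. \<bar>y n t\<bar> \<partial>M) < c"
        by (auto simp: eventually_sequentially)
      with cl[of n] show False by simp
    qed
  qed
qed

end
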